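(* Let $G$ be a $d$-regular graph ($d>1$) and let $\sigma,\sigma'$ be two good signings of $G$ that are not equivalent. Define the signing $\tau$ of $G$ by $\tau(uv)=\sigma(uv)\sigma'(uv)$ for $uv\in E(G)$. Let $G'$ be the $2$-lift of $G$ determined by $\tau$: $V(G')=\bigcup_{v\in V(G)}\{v_0,v_1\}$, and for each $uv\in E(G)$, $G'$ contains the edges $u_0v_0,u_1v_1$ if $\tau(uv)=1$ and the edges $u_0v_1,u_1v_0$ if $\tau(uv)=-1$ (and no other edges). Define the signing $\phi$ of $G'$ by giving both edges of $G'$ lying over $uv\in E(G)$ the sign $\sigma'(uv)$. Then $\phi$ is a good signing of $G'$, i.e. every eigenvalue of the signed adjacency matrix $A^{\phi}$ has absolute value at most $2\sqrt{d-1}$.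
   Context: For an edge-signing $\sigma: E(H)\to\{-1,1\}$ of a graph $H$, the signed adjacency matrix $A^{\sigma}$ has $(i,j)$ entry $\sigma(ij)$ if $ij\in E(H)$ and $0$ otherwise. A good signing of a $d$-regular graph is a signing all of whose signed adjacency eigenvalues have absolute value at most $2\sqrt{d-1}$ (note $G'$ is again $d$-regular). Two signings $\sigma,\sigma'$ of $G$ are equivalent if there is a diagonal matrix $D$ with diagonal entries in $\{1,-1\}$ such that $DA^{\sigma}D=A^{\sigma'}$. *)

theory Defs
  imports "HOL-Analysis.Analysis"
begin

definition regular_graph :: "('a::finite \<Rightarrow> 'a \<Rightarrow> bool) \<Rightarrow> nat \<Rightarrow> bool" where
  "regular_graph E d \<longleftrightarrow> (\<forall>u v. E u v \<longrightarrow> E v u) \<and> (\<forall>v. \<not> E v v) \<and>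
     (\<forall>v. card {u. E v u} = d)"

definition is_signing :: "('a \<Rightarrow> 'a \<Rightarrow> bool) \<Rightarrow> ('a \<Rightarrow> 'a \<Rightarrow> real) \<Rightarrow> bool" where
  "is_signing E \<sigma> \<longleftrightarrow> (\<forall>u v. E u v \<longrightarrow> \<sigma> u v = \<sigma> v u \<and> (\<sigma> u v = 1 \<or> \<sigma> u v = -1))"

definition signed_adj :: "('a::finite \<Rightarrow> 'a \<Rightarrow> bool) \<Rightarrow> ('a \<Rightarrow> 'a \<Rightarrow> real) \<Rightarrow> real^'a^'a" where
  "signed_adj E \<sigma> = (\<chi> i j. if E i j then \<sigma> i j else 0)"

definition is_eigenvalue :: "real^'n^'n \<Rightarrow> real \<Rightarrow> bool" where
  "is_eigenvalue A c \<longleftrightarrow> (\<exists>x. x \<noteq> 0 \<and> A *v x = c *\<^sub>R x)"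

definition good_signing :: "('a::finite \<Rightarrow> 'a \<Rightarrow> bool) \<Rightarrow> nat \<Rightarrow> ('a \<Rightarrow> 'a \<Rightarrow> real) \<Rightarrow> bool" where
  "good_signing E d \<sigma> \<longleftrightarrow> is_signing E \<sigma> \<and>
     (\<forall>c. is_eigenvalue (signed_adj E \<sigma>) c \<longrightarrow> \<bar>c\<bar> \<le> 2 * sqrt (real d - 1))"

definition equivalent_signings ::
  "('a::finite \<Rightarrow> 'a \<Rightarrow> bool) \<Rightarrow> ('a \<Rightarrow> 'a \<Rightarrow> real) \<Rightarrow> ('a \<Rightarrow> 'a \<Rightarrow> real) \<Rightarrow> bool" where
  "equivalent_signings E \<sigma> \<sigma>' \<longleftrightarrow>
     (\<exists>D::real^'a^'a. (\<forall>i j. i \<noteq> j \<longrightarrow> D $ i $ j = 0) \<and> (\<forall>i. D $ i $ i = 1 \<or> D $ i $ i = -1) \<and>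
        D ** signed_adj E \<sigma> ** D = signed_adj E \<sigma>')"

text \<open>The 2-lift of G determined by the signing tau; vertex v_i is (v, i) with i :: bool
(False = 0, True = 1).\<close>
definition two_lift :: "('a \<Rightarrow> 'a \<Rightarrow> bool) \<Rightarrow> ('a \<Rightarrow> 'a \<Rightarrow> real) \<Rightarrow> ('a \<times> bool) \<Rightarrow> ('a \<times> bool) \<Rightarrow> bool" where
  "two_lift E \<tau> x y \<longleftrightarrow> E (fst x) (fst y) \<and>
     (if \<tau> (fst x) (fst y) = 1 then snd x = snd y else snd x \<noteq> snd y)"

definition lift_signing :: "('a \<Rightarrow> 'a \<Rightarrow> real) \<Rightarrow> ('a \<times> bool) \<Rightarrow> ('a \<times> bool) \<Rightarrow> real" where
  "lift_signing s x y = s (fst x) (fst y)"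

end

theory Submission
  imports Defs
begin

lemma lift_mv:
  fixes E :: "'a::finite \<Rightarrow> 'a \<Rightarrow> bool" and x :: "real^('a \<times> bool)"
  shows "(signed_adj (two_lift E \<tau>) (lift_signing s) *v x) $ (u,a) =
    (\<Sum>v\<in>UNIV. if E u v then s u v * x $ (v, if \<tau> u v = 1 then a else \<not> a) else 0)"
proof -
  have "(signed_adj (two_lift E \<tau>) (lift_signing s) *v x) $ (u,a) =
     (\<Sum>p\<in>UNIV. (if two_lift E \<tau> (u,a) p then lift_signing s (u,a) p else 0) * x $ p)"
    by (simp add: matrix_vector_mult_def signed_adj_def)
  also have "\<dots> = (\<Sum>v\<in>UNIV. \<Sum>b\<in>UNIV. (if two_lift E \<tau> (u,a) (v,b) then lift_signing s (u,a) (v,b) else 0) * x $ (v,b))"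
    by (simp add: UNIV_Times_UNIV[symmetric] sum.cartesian_product del: UNIV_Times_UNIV)
  also have "\<dots> = (\<Sum>v\<in>UNIV. if E u v then s u v * x $ (v, if \<tau> u v = 1 then a else \<not> a) else 0)"
    by (rule sum.cong) (auto simp: UNIV_bool two_lift_def lift_signing_def)
  finally show ?thesis .
qed

lemma sadj_mv:
  fixes E :: "'a::finite \<Rightarrow> 'a \<Rightarrow> bool"
  shows "(signed_adj E s *v y) $ u = (\<Sum>v\<in>UNIV. (if E u v then s u v else 0) * y $ v)"
  by (simp add: matrix_vector_mult_def signed_adj_def)

theorem mainTheorem5:
  fixes E :: "'a::finite \<Rightarrow> 'a \<Rightarrow> bool" and d :: nat
    and \<sigma> \<sigma>' :: "'a \<Rightarrow> 'a \<Rightarrow> real"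
  assumes "regular_graph E d" and "d > 1"
    and "good_signing E d \<sigma>" and "good_signing E d \<sigma>'"
    and "\<not> equivalent_signings E \<sigma> \<sigma>'"
  shows "good_signing (two_lift E (\<lambda>u v. \<sigma> u v * \<sigma>' u v)) d (lift_signing \<sigma>')"
proof -
  define \<tau> where "\<tau> = (\<lambda>u v. \<sigma> u v * \<sigma>' u v)"
  have s1: "is_signing E \<sigma>" and e1: "\<And>c. is_eigenvalue (signed_adj E \<sigma>) c \<Longrightarrow> \<bar>c\<bar> \<le> 2 * sqrt (real d - 1)"
    using assms(3) by (auto simp: good_signing_def)
  have s2: "is_signing E \<sigma>'" and e2: "\<And>c. is_eigenvalue (signed_adj E \<sigma>') c \<Longrightarrow> \<bar>c\<bar> \<le> 2 * sqrt (real d - 1)"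
    using assms(4) by (auto simp: good_signing_def)
  have sig: "is_signing (two_lift E \<tau>) (lift_signing \<sigma>')"
    using s2 unfolding is_signing_def two_lift_def lift_signing_def by auto
  have "\<bar>c\<bar> \<le> 2 * sqrt (real d - 1)" if ev: "is_eigenvalue (signed_adj (two_lift E \<tau>) (lift_signing \<sigma>')) c" for c
  proof -
    obtain x where x0: "x \<noteq> 0" and xe: "signed_adj (two_lift E \<tau>) (lift_signing \<sigma>') *v x = c *\<^sub>R x"
      using ev unfolding is_eigenvalue_def by blast
    have comp: "(\<Sum>v\<in>UNIV. if E u v then \<sigma>' u v * x $ (v, if \<tau> u v = 1 then a else \<not> a) else 0) = c * x $ (u,a)" for u a
      using arg_cong[OF xe, of "\<lambda>w. w $ (u,a)"] by (simp add: lift_mv)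
    define y :: "real^'a" where "y = (\<chi> u. x $ (u,False) + x $ (u,True))"
    define z :: "real^'a" where "z = (\<chi> u. x $ (u,False) - x $ (u,True))"
    have ye: "signed_adj E \<sigma>' *v y = c *\<^sub>R y"
    proof (rule vec_eq_iff[THEN iffD2], rule allI)
      fix u
      have "(signed_adj E \<sigma>' *v y) $ u = (\<Sum>v\<in>UNIV. (if E u v then \<sigma>' u v * x $ (v, if \<tau> u v = 1 then False else \<not> False) else 0)
            + (if E u v then \<sigma>' u v * x $ (v, if \<tau> u v = 1 then True else \<not> True) else 0))"
        unfolding sadj_mv y_def by (rule sum.cong) (auto simp: algebra_simps)
      also have "\<dots> = c * x $ (u,False) + c * x $ (u,True)"
        by (simp only: sum.distrib comp)
      finally show "(signed_adj E \<sigma>' *v y) $ u = (c *\<^sub>R y) $ u" by (simp add: y_def algebra_simps)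
    qed
    have ze: "signed_adj E \<sigma> *v z = c *\<^sub>R z"
    proof (rule vec_eq_iff[THEN iffD2], rule allI)
      fix u
      have "(signed_adj E \<sigma> *v z) $ u = (\<Sum>v\<in>UNIV. (if E u v then \<sigma>' u v * x $ (v, if \<tau> u v = 1 then False else \<not> False) else 0)
            - (if E u v then \<sigma>' u v * x $ (v, if \<tau> u v = 1 then True else \<not> True) else 0))"
        unfolding sadj_mv z_def
      proof (rule sum.cong)
        fix v
        show "(if E u v then \<sigma> u v else 0) * (\<chi> u. x $ (u, False) - x $ (u, True)) $ v =
         (if E u v then \<sigma>' u v * x $ (v, if \<tau> u v = 1 then False else \<not> False) else 0) -
         (if E u v then \<sigma>' u v * x $ (v, if \<tau> u v = 1 then True else \<not> True) else 0)"
        proof (cases "E u v")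
          case True
          then have "\<sigma> u v = 1 \<or> \<sigma> u v = -1" "\<sigma>' u v = 1 \<or> \<sigma>' u v = -1"
            using s1 s2 unfolding is_signing_def by auto
          then show ?thesis using True unfolding \<tau>_def by (auto simp: algebra_simps)
        qed simp
      qed simp
      also have "\<dots> = c * x $ (u,False) - c * x $ (u,True)"
        by (simp only: sum_subtractf comp)
      finally show "(signed_adj E \<sigma> *v z) $ u = (c *\<^sub>R z) $ u" by (simp add: z_def algebra_simps)
    qed
    show ?thesis
    proof (cases "y = 0")
      case False
      then show ?thesis using e2 ye unfolding is_eigenvalue_def by blast
    next
      case True
      have "z \<noteq> 0"
      proof
        assume "z = 0"
        have "x = 0"
        proof (rule vec_eq_iff[THEN iffD2], rule allI)
          fix p :: "'a \<times> bool"
          obtain u b where p: "p = (u,b)" by (cases p)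
          have "x $ (u,False) + x $ (u,True) = 0" "x $ (u,False) - x $ (u,True) = 0"
            using arg_cong[OF True, of "\<lambda>w. w $ u"] arg_cong[OF \<open>z = 0\<close>, of "\<lambda>w. w $ u"]
            by (auto simp: y_def z_def)
          then show "x $ p = 0 $ p" using p by (cases b) auto
        qed
        with x0 show False by simp
      qed
      then show ?thesis using e1 ze unfolding is_eigenvalue_def by blast
    qed
  qed
  then show ?thesis using sig unfolding good_signing_def \<tau>_def by blast
qed

end
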